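(* There exists a constant $c>0$ such that, for every generic set $P$ of $n$ points in the plane, $\operatorname{cr}(P) < cn$.
   Context: A finite planar point set is in general position if no three of its points are collinear. It is generic if it is in general position and every subset of it has a unique (Euclidean) minimum spanning tree (MST); for a generic set $X$, $T_X$ denotes the MST of $X$ (the complete graph on $X$ with edges drawn as straight segments weighted by Euclidean length). For disjoint point sets $R,B$ with $R\cup B$ generic, $\operatorname{cr}(R,B)$ denotes the number of crossings between the straight-line edges of $T_R$ and the straight-line edges of $T_B$. For a generic point set $P$, the bicolored MST crossing number is $\operatorname{cr}(P)=\max \operatorname{cr}(R,B)$, the maximum over all partitions (colorings) $P=R\cup B$ into two disjoint sets. *)

theory Defs
  imports "HOL-Analysis.Analysis"
begin

type_synonym point = "real ^ 2"

definition complete_edges :: "point set \<Rightarrow> point set set" where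
  "complete_edges X = {{a, b} | a b. a \<in> X \<and> b \<in> X \<and> a \<noteq> b}"

definition edge_len :: "point set \<Rightarrow> real" where
  "edge_len e = (THE d. \<exists>a b. e = {a, b} \<and> d = dist a b)"

definition weight :: "point set set \<Rightarrow> real" where
  "weight E = (\<Sum>e\<in>E. edge_len e)"

definition adj :: "point set set \<Rightarrow> (point \<times> point) set" where
  "adj E = {(a, b). {a, b} \<in> E \<and> a \<noteq> b}"

definition is_spanning_tree :: "point set \<Rightarrow> point set set \<Rightarrow> bool" where
  "is_spanning_tree X E \<longleftrightarrow>
     E \<subseteq> complete_edges X \<and>
     (\<forall>x\<in>X. \<forall>y\<in>X. (x, y) \<in> (adj E)\<^sup>*) \<and>
     card E = card X - 1"

definition is_MST :: "point set \<Rightarrow> point set set \<Rightarrow> bool" where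
  "is_MST X E \<longleftrightarrow> is_spanning_tree X E \<and>
     (\<forall>E'. is_spanning_tree X E' \<longrightarrow> weight E \<le> weight E')"

definition MST :: "point set \<Rightarrow> point set set" where
  "MST X = (THE E. is_MST X E)"

definition general_position :: "point set \<Rightarrow> bool" where
  "general_position P \<longleftrightarrow>
     (\<forall>a\<in>P. \<forall>b\<in>P. \<forall>c\<in>P. a \<noteq> b \<and> a \<noteq> c \<and> b \<noteq> c \<longrightarrow> \<not> collinear {a, b, c})"

definition generic :: "point set \<Rightarrow> bool" where
  "generic P \<longleftrightarrow> finite P \<and> general_position P \<and>
     (\<forall>S. S \<subseteq> P \<longrightarrow> (\<exists>!E. is_MST S E))"

definition cr2 :: "point set \<Rightarrow> point set \<Rightarrow> nat" where
  "cr2 R B = card {(e, f). e \<in> MST R \<and> f \<in> MST B \<and> convex hull e \<inter> convex hull f \<noteq> {}}"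

definition cr :: "point set \<Rightarrow> nat" where
  "cr P = Max {cr2 R (P - R) | R. R \<subseteq> P}"

end

theory Submission
  imports Defs
begin


lemma adj_sym: "(x,y) \<in> adj F \<Longrightarrow> (y,x) \<in> adj F"
  by (auto simp: adj_def insert_commute)

lemma rtr_sym: "(x,y) \<in> (adj F)\<^sup>* \<Longrightarrow> (y,x) \<in> (adj F)\<^sup>*"
proof (induction rule: rtrancl_induct)
  case base then show ?case by simp
next
  case (step y z)
  then show ?case using adj_sym[OF step(2)] by (meson converse_rtrancl_into_rtrancl)
qed

lemma adj_mono: "F \<subseteq> G \<Longrightarrow> adj F \<subseteq> adj G"
  by (auto simp: adj_def)

lemma rtr_mono: "F \<subseteq> G \<Longrightarrow> p \<in> (adj F)\<^sup>* \<Longrightarrow> p \<in> (adj G)\<^sup>*"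
  using rtrancl_mono[OF adj_mono] by blast

lemma complete_edges_finite: "finite X \<Longrightarrow> finite (complete_edges X)"
proof -
  assume "finite X"
  have "complete_edges X \<subseteq> (\<lambda>(a,b). {a,b}) ` (X \<times> X)"
    by (auto simp: complete_edges_def)
  then show ?thesis using \<open>finite X\<close> by (meson finite_SigmaI finite_imageI finite_subset)
qed

lemma complete_edgesD: "{a,b} \<in> complete_edges X \<Longrightarrow> a \<in> X \<and> b \<in> X"
  by (auto simp: complete_edges_def doubleton_eq_iff)

lemma complete_edgesI: "a \<in> X \<Longrightarrow> b \<in> X \<Longrightarrow> a \<noteq> b \<Longrightarrow> {a,b} \<in> complete_edges X"
  by (auto simp: complete_edges_def)

lemma edge_len_pair: "edge_len {a,b} = dist a b"
  unfolding edge_len_def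
  by (rule the_equality) (auto simp: doubleton_eq_iff dist_commute)

lemma conn_card:
  assumes fX: "finite X" and FX: "F \<subseteq> complete_edges X" and x0: "x0 \<in> X"
    and conn: "\<forall>x\<in>X. (x,x0) \<in> (adj F)\<^sup>*"
  shows "card X - 1 \<le> card F"
proof -
  define R where "R = adj F"
  define dd where "dd v = (LEAST n. (v,x0) \<in> R ^^ n)" for v
  have ex: "\<exists>w. (v,w) \<in> R \<and> dd w < dd v" if v: "v \<in> X - {x0}" for v
  proof -
    obtain n where n: "(v,x0) \<in> R ^^ n" using conn v rtrancl_power unfolding R_def by blast
    have dv: "(v,x0) \<in> R ^^ dd v" unfolding dd_def by (rule LeastI[of _ n]) (rule n)
    have "dd v \<noteq> 0"
    proof
      assume "dd v = 0"
      then have "(v,x0) \<in> R ^^ 0" using dv by simp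
      then show False using v by (auto elim: relpow_0_E)
    qed
    then obtain m where m: "dd v = Suc m" by (cases "dd v") auto
    then obtain w where w: "(v,w) \<in> R" "(w,x0) \<in> R ^^ m" using dv relpow_Suc_D2 by metis
    have "dd w \<le> m" unfolding dd_def by (rule Least_le) (rule w(2))
    then show ?thesis using w m by auto
  qed
  define nx where "nx v = (SOME w. (v,w) \<in> R \<and> dd w < dd v)" for v
  have nx: "(v, nx v) \<in> R \<and> dd (nx v) < dd v" if "v \<in> X - {x0}" for v
    unfolding nx_def by (rule someI_ex) (rule ex[OF that])
  define h where "h v = {v, nx v}" for v
  have inj: "inj_on h (X - {x0})"
  proof (rule inj_onI)
    fix v v' assume v: "v \<in> X - {x0}" and v': "v' \<in> X - {x0}" and eq: "h v = h v'"
    show "v = v'"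
    proof (rule ccontr)
      assume ne: "v \<noteq> v'"
      then have e1: "v = nx v' \<and> v' = nx v" using eq unfolding h_def by (auto simp: doubleton_eq_iff)
      have A1: "dd (nx v) < dd v" using nx[OF v] by blast
      have A2: "dd (nx v') < dd v'" using nx[OF v'] by blast
      have n1: "nx v = v'" using conjunct2[OF e1] by (rule sym)
      have n2: "nx v' = v" using conjunct1[OF e1] by (rule sym)
      have "dd v' < dd v" using A1 unfolding n1 .
      moreover have "dd v < dd v'" using A2 unfolding n2 .
      ultimately show False by simp
    qed
  qed
  have img: "h ` (X - {x0}) \<subseteq> F"
    using nx unfolding h_def R_def adj_def by auto
  have fF: "finite F" using complete_edges_finite[OF fX] FX finite_subset by blast
  have "card (X - {x0}) \<le> card F" by (rule card_inj_on_le[OF inj img fF])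
  then show ?thesis using x0 fX by simp
qed

lemma split_reach:
  assumes ab: "{a,b} \<in> E" and p: "(a,x) \<in> (adj E)\<^sup>*"
  shows "(a,x) \<in> (adj (E - {{a,b}}))\<^sup>* \<or> (b,x) \<in> (adj (E - {{a,b}}))\<^sup>*"
  using p
proof (induction rule: rtrancl_induct)
  case base then show ?case by simp
next
  case (step y z)
  show ?case
  proof (cases "{y,z} = {a,b}")
    case True
    then have "z = a \<or> z = b" by (auto simp: doubleton_eq_iff)
    then show ?thesis by auto
  next
    case False
    then have "(y,z) \<in> adj (E - {{a,b}})" using step(2) by (auto simp: adj_def)
    then show ?thesis using step(3) by (meson rtrancl_into_rtrancl)
  qed
qed

lemma tree_edge_cut:
  assumes fX: "finite X" and T: "is_spanning_tree X E" and ab: "{a,b} \<in> E" and ne: "a \<noteq> b"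
  shows "(a,b) \<notin> (adj (E - {{a,b}}))\<^sup>*"
proof
  assume abr: "(a,b) \<in> (adj (E - {{a,b}}))\<^sup>*"
  let ?E' = "E - {{a,b}}"
  have EX: "E \<subseteq> complete_edges X" using T by (simp add: is_spanning_tree_def)
  have aX: "a \<in> X" and bX: "b \<in> X" using complete_edgesD ab EX by blast+
  have all: "\<forall>x\<in>X. (x,a) \<in> (adj ?E')\<^sup>*"
  proof
    fix x assume x: "x \<in> X"
    have "(a,x) \<in> (adj E)\<^sup>*" using T aX x by (simp add: is_spanning_tree_def)
    then have "(a,x) \<in> (adj ?E')\<^sup>* \<or> (b,x) \<in> (adj ?E')\<^sup>*" by (rule split_reach[OF ab])
    then have "(a,x) \<in> (adj ?E')\<^sup>*" using abr by (meson rtrancl_trans)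
    then show "(x,a) \<in> (adj ?E')\<^sup>*" by (rule rtr_sym)
  qed
  have "card X - 1 \<le> card ?E'"
    by (rule conn_card[OF fX _ aX all]) (use EX in blast)
  moreover have fE: "finite E" using complete_edges_finite[OF fX] EX finite_subset by blast
  moreover have "card E = card X - 1" using T by (simp add: is_spanning_tree_def)
  moreover have "card X \<ge> 2"
  proof -
    have "{a,b} \<subseteq> X" using aX bX by auto
    then have "card {a,b} \<le> card X" using fX card_mono by blast
    then show ?thesis using ne by simp
  qed
  ultimately show False using ab by (simp add: card_Diff_singleton)
qed

lemma exchange:
  assumes fX: "finite X" and M: "is_MST X E" and ab: "{a,b} \<in> E" and ne: "a \<noteq> b"
    and g: "g \<in> complete_edges X" and glen: "edge_len g < dist a b"
    and conn: "(a,b) \<in> (adj (insert g (E - {{a,b}})))\<^sup>*"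
  shows False
proof -
  let ?E' = "E - {{a,b}}"
  let ?E'' = "insert g ?E'"
  have T: "is_spanning_tree X E" using M by (simp add: is_MST_def)
  have EX: "E \<subseteq> complete_edges X" using T by (simp add: is_spanning_tree_def)
  have fE: "finite E" using complete_edges_finite[OF fX] EX finite_subset by blast
  have aX: "a \<in> X" and bX: "b \<in> X" using complete_edgesD ab EX by blast+
  have gE: "g \<notin> ?E'"
  proof
    assume "g \<in> ?E'"
    then have "?E'' = ?E'" by auto
    then show False using conn tree_edge_cut[OF fX T ab ne] by simp
  qed
  have reach: "(a,x) \<in> (adj ?E'')\<^sup>*" if x: "x \<in> X" for x
  proof -
    have "(a,x) \<in> (adj E)\<^sup>*" using T aX x by (simp add: is_spanning_tree_def)
    then have "(a,x) \<in> (adj ?E')\<^sup>* \<or> (b,x) \<in> (adj ?E')\<^sup>*" by (rule split_reach[OF ab])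
    then have "(a,x) \<in> (adj ?E'')\<^sup>* \<or> (b,x) \<in> (adj ?E'')\<^sup>*"
      using rtr_mono[of ?E' ?E''] by blast
    then show ?thesis using conn by (meson rtrancl_trans)
  qed
  have conn2: "\<forall>x\<in>X. \<forall>y\<in>X. (x,y) \<in> (adj ?E'')\<^sup>*"
    using reach rtr_sym by (meson rtrancl_trans)
  have sub: "?E'' \<subseteq> complete_edges X" using g EX by auto
  have c1: "card ?E' = card E - 1" using fE ab by (simp add: card_Diff_singleton)
  have c2: "0 < card E" using fE ab card_gt_0_iff by blast
  have c3: "card ?E'' = Suc (card ?E')" using fE gE by (simp add: card_insert_disjoint)
  have "card ?E'' = card E" using c1 c2 c3 by linarith
  then have ST: "is_spanning_tree X ?E''"
    using T sub conn2 by (simp add: is_spanning_tree_def)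
  then have "weight E \<le> weight ?E''" using M by (simp add: is_MST_def)
  moreover have "weight ?E'' = edge_len g + weight ?E'"
    unfolding weight_def using gE fE by simp
  moreover have "weight E = edge_len {a,b} + weight ?E'"
    unfolding weight_def using fE ab by (simp add: sum.remove)
  ultimately show False using glen by (simp add: edge_len_pair)
qed

lemma mst_pair:
  assumes fX: "finite X" and M: "is_MST X E" and ab: "{a,b} \<in> E" and ab': "{a',b'} \<in> E"
    and dif: "{a,b} \<noteq> {a',b'}" and ne: "a \<noteq> b" and ne': "a' \<noteq> b'"
    and d1: "dist a a' < dist a b" and d2: "dist b b' < dist a b"
  shows False
proof -
  let ?E' = "E - {{a,b}}"
  have T: "is_spanning_tree X E" using M by (simp add: is_MST_def)
  have EX: "E \<subseteq> complete_edges X" using T by (simp add: is_spanning_tree_def)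
  have aX: "a \<in> X" and bX: "b \<in> X" using complete_edgesD ab EX by blast+
  have aX': "a' \<in> X" and bX': "b' \<in> X" using complete_edgesD ab' EX by blast+
  have cut: "(a,b) \<notin> (adj ?E')\<^sup>*" by (rule tree_edge_cut[OF fX T ab ne])
  have e': "(a',b') \<in> adj ?E'" using ab' dif ne' by (auto simp: adj_def)
  have "(a,a') \<in> (adj E)\<^sup>*" using T aX aX' by (simp add: is_spanning_tree_def)
  then have "(a,a') \<in> (adj ?E')\<^sup>* \<or> (b,a') \<in> (adj ?E')\<^sup>*" by (rule split_reach[OF ab])
  then show False
  proof
    assume h: "(a,a') \<in> (adj ?E')\<^sup>*"
    then have h2: "(a,b') \<in> (adj ?E')\<^sup>*" using e' by (meson rtrancl_into_rtrancl)
    show False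
    proof (cases "b = b'")
      case True then show False using h2 cut by simp
    next
      case False
      let ?g = "{b,b'}"
      have "(a,b') \<in> (adj (insert ?g ?E'))\<^sup>*" using h2 rtr_mono[of ?E' "insert ?g ?E'"] by blast
      moreover have "(b',b) \<in> adj (insert ?g ?E')" using False by (auto simp: adj_def)
      ultimately have c1: "(a,b) \<in> (adj (insert ?g ?E'))\<^sup>*" by (meson rtrancl_into_rtrancl)
      show False
      proof -
        have gl: "edge_len {b,b'} < dist a b" using d2 by (simp only: edge_len_pair)
        show False by (rule exchange[OF fX M ab ne complete_edgesI[OF bX bX' False] gl c1])
      qed
    qed
  next
    assume h: "(b,a') \<in> (adj ?E')\<^sup>*"
    show False
    proof (cases "a = a'")
      case True
      have "(a,b) \<in> (adj ?E')\<^sup>*" using rtr_sym[OF h] True by simp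
      then show False using cut by simp
    next
      case False
      let ?g = "{a,a'}"
      have "(a',b) \<in> (adj (insert ?g ?E'))\<^sup>*"
        using rtr_sym[OF h] rtr_mono[of ?E' "insert ?g ?E'"] by blast
      moreover have "(a,a') \<in> adj (insert ?g ?E')" using False by (auto simp: adj_def)
      ultimately have c1: "(a,b) \<in> (adj (insert ?g ?E'))\<^sup>*" by (meson converse_rtrancl_into_rtrancl)
      show False
      proof -
        have gl: "edge_len {a,a'} < dist a b" using d1 by (simp only: edge_len_pair)
        show False by (rule exchange[OF fX M ab ne complete_edgesI[OF aX aX' False] gl c1])
      qed
    qed
  qed
qed



definition ptype :: "real \<Rightarrow> real \<Rightarrow> real \<Rightarrow> int" where
  "ptype L al be = (if be < L/4 then 0 else if al < L/4 then 1 else 2)"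

lemma geo_real:
  fixes a1 b1 a2 b2 A B D L :: real
  assumes "a1 \<ge> 0" "b1 \<ge> 0" "a2 \<ge> 0" "b2 \<ge> 0" "a1 + b1 \<ge> L" "a2 + b2 \<ge> L" "L > 0"
    "D < L/8"
    "A \<le> D + \<bar>a1 - a2\<bar> + min a1 a2 / 2"
    "B \<le> D + \<bar>b1 - b2\<bar> + min b1 b2 / 2"
    "ptype L a1 b1 = ptype L a2 b2"
  shows "A < max (a1+b1) (a2+b2) \<and> B < max (a1+b1) (a2+b2)"
  using assms unfolding ptype_def
  by (auto simp: abs_if min_def max_def split: if_splits)

lemma norm_combo:
  fixes u1 u2 :: "'a::real_normed_vector"
  assumes "norm u1 = 1" "norm u2 = 1" "p \<ge> 0" "q \<ge> 0"
  shows "norm (p *\<^sub>R u1 - q *\<^sub>R u2) \<le> \<bar>p - q\<bar> + min p q * norm (u1 - u2)"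
proof (cases "q \<le> p")
  case True
  have "p *\<^sub>R u1 - q *\<^sub>R u2 = (p - q) *\<^sub>R u1 + q *\<^sub>R (u1 - u2)" by (simp add: algebra_simps)
  then have "norm (p *\<^sub>R u1 - q *\<^sub>R u2) \<le> norm ((p - q) *\<^sub>R u1) + norm (q *\<^sub>R (u1 - u2))"
    by (metis norm_triangle_ineq)
  also have "\<dots> = (p - q) + q * norm (u1 - u2)" using True assms by simp
  finally have "norm (p *\<^sub>R u1 - q *\<^sub>R u2) \<le> (p - q) + q * norm (u1 - u2)" .
  moreover have "min p q = q" "\<bar>p - q\<bar> = p - q" using True by auto
  ultimately show ?thesis by simp
next
  case False
  have "p *\<^sub>R u1 - q *\<^sub>R u2 = p *\<^sub>R (u1 - u2) - (q - p) *\<^sub>R u2" by (simp add: algebra_simps)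
  then have "norm (p *\<^sub>R u1 - q *\<^sub>R u2) \<le> norm (p *\<^sub>R (u1 - u2)) + norm ((q - p) *\<^sub>R u2)"
    by (metis norm_triangle_ineq4)
  also have "\<dots> = p * norm (u1 - u2) + (q - p)" using False assms by simp
  finally have "norm (p *\<^sub>R u1 - q *\<^sub>R u2) \<le> p * norm (u1 - u2) + (q - p)" .
  moreover have "min p q = p" "\<bar>p - q\<bar> = q - p" using False by auto
  ultimately show ?thesis by simp
qed

lemma floor_close:
  fixes p q :: real
  assumes "\<lfloor>k * p\<rfloor> = \<lfloor>k * q\<rfloor>" "k > 0"
  shows "\<bar>p - q\<bar> < 1/k"
proof -
  have "of_int \<lfloor>k * p\<rfloor> \<le> k * p" "k * p < of_int \<lfloor>k * p\<rfloor> + 1"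
       "of_int \<lfloor>k * q\<rfloor> \<le> k * q" "k * q < of_int \<lfloor>k * q\<rfloor> + 1"
    by linarith+
  moreover have "real_of_int \<lfloor>k * p\<rfloor> = real_of_int \<lfloor>k * q\<rfloor>" using assms(1) by simp
  ultimately have "k * p - k * q < 1" "k * q - k * p < 1" by linarith+
  then have "\<bar>k * p - k * q\<bar> < 1" by (simp add: abs_less_iff)
  then have "k * \<bar>p - q\<bar> < 1" using assms(2) by (simp add: abs_mult right_diff_distrib[symmetric])
  then show ?thesis using assms(2) by (simp add: field_simps)
qed

lemma norm2_small:
  fixes u v :: "real^2"
  assumes "\<bar>u$1 - v$1\<bar> < 1/4" "\<bar>u$2 - v$2\<bar> < 1/4"
  shows "norm (u - v) \<le> 1/2"
proof -
  have "norm (u - v) \<le> (\<Sum>i\<in>UNIV. \<bar>(u - v)$i\<bar>)" by (rule norm_le_l1_cart)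
  also have "\<dots> = \<bar>u$1 - v$1\<bar> + \<bar>u$2 - v$2\<bar>" by (simp add: sum_2)
  finally show ?thesis using assms by linarith
qed



lemma cross_bound:
  assumes fX: "finite X" and M: "is_MST X E" and cd: "c \<noteq> d"
  shows "card {e\<in>E. dist c d \<le> edge_len e \<and> convex hull e \<inter> convex hull {c,d} \<noteq> {}} \<le> 2187"
proof -
  define S where "S = {e\<in>E. dist c d \<le> edge_len e \<and> convex hull e \<inter> convex hull {c,d} \<noteq> {}}"
  define L where "L = dist c d"
  have L0: "L > 0" using cd by (simp add: L_def)
  have EX: "E \<subseteq> complete_edges X" using M by (simp add: is_MST_def is_spanning_tree_def)
  define P where "P e q \<longleftrightarrow> (case q of (a,b,s,t) \<Rightarrow> e = {a,b} \<and> a \<noteq> b \<and> 0 \<le> s \<and> s \<le> 1 \<and> 0 \<le> t \<and> t \<le> 1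
      \<and> (1-s) *\<^sub>R a + s *\<^sub>R b = (1-t) *\<^sub>R c + t *\<^sub>R d)" for e and q :: "point \<times> point \<times> real \<times> real"
  have "\<forall>e\<in>S. \<exists>q. P e q"
  proof
    fix e assume e: "e \<in> S"
    then have "e \<in> complete_edges X" using EX S_def by auto
    then obtain a b where ab: "e = {a,b}" "a \<noteq> b" by (auto simp: complete_edges_def)
    from e obtain z where z: "z \<in> convex hull e" "z \<in> convex hull {c,d}" by (auto simp: S_def)
    obtain s where s: "0 \<le> s" "s \<le> 1" "z = (1-s) *\<^sub>R a + s *\<^sub>R b"
      using z(1) ab by (auto simp: segment_convex_hull[symmetric] in_segment)
    obtain t where t: "0 \<le> t" "t \<le> 1" "z = (1-t) *\<^sub>R c + t *\<^sub>R d"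
      using z(2) by (auto simp: segment_convex_hull[symmetric] in_segment)
    have st: "(1-s) *\<^sub>R a + s *\<^sub>R b = (1-t) *\<^sub>R c + t *\<^sub>R d" using s(3) t(3) by simp
    show "\<exists>q. P e q" by (rule exI[of _ "(a,b,s,t)"]) (simp add: P_def ab s(1,2) t(1,2) st)
  qed
  from bchoice[OF this] obtain f where f: "\<forall>e\<in>S. P e (f e)" by blast
  define A where "A e = fst (f e)" for e
  define B where "B e = fst (snd (f e))" for e
  define s where "s e = fst (snd (snd (f e)))" for e
  define t where "t e = snd (snd (snd (f e)))" for e
  have Pe: "e = {A e, B e} \<and> A e \<noteq> B e \<and> 0 \<le> s e \<and> s e \<le> 1 \<and> 0 \<le> t e \<and> t e \<le> 1
      \<and> (1 - s e) *\<^sub>R A e + s e *\<^sub>R B e = (1 - t e) *\<^sub>R c + t e *\<^sub>R d" if "e \<in> S" for e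
    using f that unfolding A_def B_def s_def t_def P_def by (cases "f e") auto
  define l where "l e = dist (A e) (B e)" for e
  define U where "U e = (1 / l e) *\<^sub>R (A e - B e)" for e
  define x where "x e = (1 - t e) *\<^sub>R c + t e *\<^sub>R d" for e
  define al where "al e = s e * l e" for e
  define be where "be e = (1 - s e) * l e" for e
  have lpos: "l e > 0" if "e \<in> S" for e using Pe[OF that] by (simp add: l_def)
  have lge: "L \<le> l e" if "e \<in> S" for e
  proof -
    have "edge_len e = l e" using Pe[OF that] by (metis edge_len_pair l_def)
    then show ?thesis using that by (simp add: S_def L_def)
  qed
  have nU: "norm (U e) = 1" if "e \<in> S" for e
    using lpos[OF that] by (simp add: U_def l_def dist_norm)
  have sU: "al e *\<^sub>R U e = s e *\<^sub>R (A e - B e)" "be e *\<^sub>R U e = (1 - s e) *\<^sub>R (A e - B e)"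
    if "e \<in> S" for e
    using lpos[OF that] by (simp_all add: al_def be_def U_def)
  have aeq: "A e = x e + al e *\<^sub>R U e" if "e \<in> S" for e
  proof -
    have "x e = (1 - s e) *\<^sub>R A e + s e *\<^sub>R B e" using Pe[OF that] by (simp add: x_def)
    then have "x e + al e *\<^sub>R U e = ((1 - s e) *\<^sub>R A e + s e *\<^sub>R B e) + s e *\<^sub>R (A e - B e)"
      using sU[OF that] by simp
    also have "\<dots> = A e" by (simp add: algebra_simps)
    finally show ?thesis by simp
  qed
  have beq: "B e = x e - be e *\<^sub>R U e" if "e \<in> S" for e
  proof -
    have "x e = (1 - s e) *\<^sub>R A e + s e *\<^sub>R B e" using Pe[OF that] by (simp add: x_def)
    then have "x e - be e *\<^sub>R U e = ((1 - s e) *\<^sub>R A e + s e *\<^sub>R B e) - (1 - s e) *\<^sub>R (A e - B e)"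
      using sU[OF that] by simp
    also have "\<dots> = B e" by (simp add: algebra_simps)
    finally show ?thesis by simp
  qed
  have alnn: "al e \<ge> 0" "be e \<ge> 0" "al e + be e = l e" if "e \<in> S" for e
    using Pe[OF that] lpos[OF that] by (auto simp: al_def be_def algebra_simps)
  define key where "key e = (\<lfloor>4 * U e $ 1\<rfloor>, \<lfloor>4 * U e $ 2\<rfloor>, \<lfloor>8 * t e\<rfloor>, ptype L (al e) (be e))" for e
  define T where "T = {-4..4::int} \<times> {-4..4::int} \<times> {0..8::int} \<times> {0..2::int}"
  have inj: "inj_on key S"
  proof (rule inj_onI)
    fix e1 e2 assume e1: "e1 \<in> S" and e2: "e2 \<in> S" and k: "key e1 = key e2"
    show "e1 = e2"
    proof (rule ccontr)
      assume ne: "e1 \<noteq> e2"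
      have k1: "\<lfloor>4 * U e1 $ 1\<rfloor> = \<lfloor>4 * U e2 $ 1\<rfloor>" and k2: "\<lfloor>4 * U e1 $ 2\<rfloor> = \<lfloor>4 * U e2 $ 2\<rfloor>"
        and k3: "\<lfloor>8 * t e1\<rfloor> = \<lfloor>8 * t e2\<rfloor>" and k4: "ptype L (al e1) (be e1) = ptype L (al e2) (be e2)"
        using k by (simp_all add: key_def)
      have nUU: "norm (U e1 - U e2) \<le> 1/2"
        using norm2_small floor_close[OF k1] floor_close[OF k2] by simp
      have tt: "\<bar>t e1 - t e2\<bar> < 1/8" using floor_close[OF k3] by simp
      have "x e1 - x e2 = (t e1 - t e2) *\<^sub>R (d - c)" by (simp add: x_def algebra_simps)
      then have "norm (x e1 - x e2) = \<bar>t e1 - t e2\<bar> * L"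
        by (simp add: L_def dist_norm norm_minus_commute)
      also have "\<dots> < 1/8 * L" using tt L0 by (rule mult_strict_right_mono)
      finally have D: "norm (x e1 - x e2) < L/8" by simp
      have An: "norm (A e1 - A e2) \<le> norm (x e1 - x e2) + \<bar>al e1 - al e2\<bar> + min (al e1) (al e2) / 2"
      proof -
        have "A e1 - A e2 = (x e1 - x e2) + (al e1 *\<^sub>R U e1 - al e2 *\<^sub>R U e2)"
          using aeq[OF e1] aeq[OF e2] by (simp add: algebra_simps)
        then have "norm (A e1 - A e2) \<le> norm (x e1 - x e2) + norm (al e1 *\<^sub>R U e1 - al e2 *\<^sub>R U e2)"
          by (metis norm_triangle_ineq)
        also have "norm (al e1 *\<^sub>R U e1 - al e2 *\<^sub>R U e2) \<le> \<bar>al e1 - al e2\<bar> + min (al e1) (al e2) * norm (U e1 - U e2)"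
          by (rule norm_combo) (use nU[OF e1] nU[OF e2] alnn[OF e1] alnn[OF e2] in auto)
        also have "min (al e1) (al e2) * norm (U e1 - U e2) \<le> min (al e1) (al e2) * (1/2)"
          by (rule mult_left_mono) (use nUU alnn[OF e1] alnn[OF e2] in auto)
        finally show ?thesis by simp
      qed
      have Bn: "norm (B e1 - B e2) \<le> norm (x e1 - x e2) + \<bar>be e1 - be e2\<bar> + min (be e1) (be e2) / 2"
      proof -
        have "B e1 - B e2 = (x e1 - x e2) - (be e1 *\<^sub>R U e1 - be e2 *\<^sub>R U e2)"
          using beq[OF e1] beq[OF e2] by (simp add: algebra_simps)
        then have "norm (B e1 - B e2) \<le> norm (x e1 - x e2) + norm (be e1 *\<^sub>R U e1 - be e2 *\<^sub>R U e2)"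
          by (metis norm_triangle_ineq4)
        also have "norm (be e1 *\<^sub>R U e1 - be e2 *\<^sub>R U e2) \<le> \<bar>be e1 - be e2\<bar> + min (be e1) (be e2) * norm (U e1 - U e2)"
          by (rule norm_combo) (use nU[OF e1] nU[OF e2] alnn[OF e1] alnn[OF e2] in auto)
        also have "min (be e1) (be e2) * norm (U e1 - U e2) \<le> min (be e1) (be e2) * (1/2)"
          by (rule mult_left_mono) (use nUU alnn[OF e1] alnn[OF e2] in auto)
        finally show ?thesis by simp
      qed
      have G: "norm (A e1 - A e2) < max (al e1 + be e1) (al e2 + be e2) \<and>
               norm (B e1 - B e2) < max (al e1 + be e1) (al e2 + be e2)"
        by (rule geo_real[OF _ _ _ _ _ _ L0 D An Bn k4])
           (use alnn[OF e1] alnn[OF e2] lge[OF e1] lge[OF e2] in auto)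
      have l1: "al e1 + be e1 = dist (A e1) (B e1)" and l2: "al e2 + be e2 = dist (A e2) (B e2)"
        using alnn[OF e1] alnn[OF e2] by (simp_all add: l_def)
      have m1: "{A e1, B e1} \<in> E" using Pe[OF e1] e1 by (simp add: S_def)
      have m2: "{A e2, B e2} \<in> E" using Pe[OF e2] e2 by (simp add: S_def)
      have dif: "{A e1, B e1} \<noteq> {A e2, B e2}" using Pe[OF e1] Pe[OF e2] ne by metis
      have n1: "A e1 \<noteq> B e1" and n2: "A e2 \<noteq> B e2" using Pe[OF e1] Pe[OF e2] by auto
      show False
      proof (cases "dist (A e2) (B e2) \<le> dist (A e1) (B e1)")
        case True
        then have "dist (A e1) (A e2) < dist (A e1) (B e1)" "dist (B e1) (B e2) < dist (A e1) (B e1)"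
          using G l1 l2 by (simp_all add: dist_norm max_def)
        then show False using mst_pair[OF fX M m1 m2 dif n1 n2] by blast
      next
        case False
        then have "dist (A e2) (A e1) < dist (A e2) (B e2)" "dist (B e2) (B e1) < dist (A e2) (B e2)"
          using G l1 l2 by (simp_all add: dist_norm max_def norm_minus_commute)
        then show False using mst_pair[OF fX M m2 m1 dif[symmetric] n2 n1] by blast
      qed
    qed
  qed
  have rng: "key ` S \<subseteq> T"
  proof
    fix y assume "y \<in> key ` S"
    then obtain e where e: "e \<in> S" "y = key e" by blast
    have c1: "\<bar>U e $ 1\<bar> \<le> 1" "\<bar>U e $ 2\<bar> \<le> 1"
      using component_le_norm_cart[of "U e"] nU[OF e(1)] by auto
    have t1: "0 \<le> t e" "t e \<le> 1" using Pe[OF e(1)] by auto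
    have "\<lfloor>4 * U e $ 1\<rfloor> \<in> {-4..4}" "\<lfloor>4 * U e $ 2\<rfloor> \<in> {-4..4}" "\<lfloor>8 * t e\<rfloor> \<in> {0..8}"
      using c1 t1 by (auto simp: le_floor_iff floor_le_iff abs_le_iff)
    moreover have "ptype L (al e) (be e) \<in> {0..2}" by (simp add: ptype_def)
    ultimately show "y \<in> T" using e by (simp add: key_def T_def)
  qed
  have fT: "finite T" by (simp add: T_def)
  have cT: "card T = 2187" by (simp add: T_def card_cartesian_product)
  have "card S \<le> card T" by (rule card_inj_on_le[OF inj rng fT])
  then show ?thesis using cT by (simp add: S_def)
qed



lemma mst_of_generic:
  assumes "generic P" "X \<subseteq> P"
  shows "is_MST X (MST X)"
proof -
  have "\<exists>!E. is_MST X E" using assms by (simp add: generic_def)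
  then show ?thesis unfolding MST_def by (rule theI')
qed

lemma mst_facts:
  assumes fX: "finite X" and M: "is_MST X E"
  shows "finite E" "card E \<le> card X" "E \<subseteq> complete_edges X"
proof -
  show EX: "E \<subseteq> complete_edges X" using M by (simp add: is_MST_def is_spanning_tree_def)
  show "finite E" using complete_edges_finite[OF fX] EX finite_subset by blast
  show "card E \<le> card X" using M by (simp add: is_MST_def is_spanning_tree_def)
qed

lemma cr2_bound:
  assumes gP: "generic P" and RP: "R \<subseteq> P"
  shows "cr2 R (P - R) \<le> 2187 * card P"
proof -
  have fP: "finite P" using gP by (simp add: generic_def)
  define B where "B = P - R"
  have fR: "finite R" and fB: "finite B" using fP RP finite_subset by (auto simp: B_def)
  have MR: "is_MST R (MST R)" by (rule mst_of_generic[OF gP RP])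
  have MB: "is_MST B (MST B)" by (rule mst_of_generic[OF gP]) (auto simp: B_def)
  define ER where "ER = MST R"
  define EB where "EB = MST B"
  note fR' = mst_facts[OF fR MR, folded ER_def]
  note fB' = mst_facts[OF fB MB, folded EB_def]
  define C where "C = {(e, f). e \<in> ER \<and> f \<in> EB \<and> convex hull e \<inter> convex hull f \<noteq> {}}"
  define K1 where "K1 f = {e\<in>ER. edge_len f \<le> edge_len e \<and> convex hull e \<inter> convex hull f \<noteq> {}}" for f
  define K2 where "K2 e = {f\<in>EB. edge_len e \<le> edge_len f \<and> convex hull f \<inter> convex hull e \<noteq> {}}" for e
  define U1 where "U1 = (\<Union>f\<in>EB. K1 f \<times> {f})"
  define U2 where "U2 = (\<Union>e\<in>ER. {e} \<times> K2 e)"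
  have sub: "C \<subseteq> U1 \<union> U2"
  proof
    fix p assume "p \<in> C"
    then obtain e f where p: "p = (e,f)" "e \<in> ER" "f \<in> EB" "convex hull e \<inter> convex hull f \<noteq> {}"
      by (auto simp: C_def)
    show "p \<in> U1 \<union> U2"
    proof (cases "edge_len f \<le> edge_len e")
      case True then show ?thesis using p by (auto simp: U1_def K1_def)
    next
      case False then show ?thesis using p by (auto simp: U2_def K2_def)
    qed
  qed
  have k1: "card (K1 f) \<le> 2187" if f: "f \<in> EB" for f
  proof -
    obtain c d where cd: "f = {c,d}" "c \<noteq> d" using f fB'(3) by (auto simp: complete_edges_def)
    show ?thesis using cross_bound[OF fR MR cd(2)] cd by (simp add: K1_def ER_def edge_len_pair)
  qed
  have k2: "card (K2 e) \<le> 2187" if e: "e \<in> ER" for e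
  proof -
    obtain c d where cd: "e = {c,d}" "c \<noteq> d" using e fR'(3) by (auto simp: complete_edges_def)
    show ?thesis using cross_bound[OF fB MB cd(2)] cd by (simp add: K2_def EB_def edge_len_pair)
  qed
  have "card U1 \<le> (\<Sum>f\<in>EB. card (K1 f \<times> {f}))" unfolding U1_def by (rule card_UN_le[OF fB'(1)])
  also have "\<dots> = (\<Sum>f\<in>EB. card (K1 f))" by (simp add: card_cartesian_product)
  also have "\<dots> \<le> card EB * 2187" using k1 sum_bounded_above[of EB "\<lambda>f. card (K1 f)" 2187] by simp
  finally have u1: "card U1 \<le> card EB * 2187" .
  have "card U2 \<le> (\<Sum>e\<in>ER. card ({e} \<times> K2 e))" unfolding U2_def by (rule card_UN_le[OF fR'(1)])
  also have "\<dots> = (\<Sum>e\<in>ER. card (K2 e))" by (simp add: card_cartesian_product)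
  also have "\<dots> \<le> card ER * 2187" using k2 sum_bounded_above[of ER "\<lambda>e. card (K2 e)" 2187] by simp
  finally have u2: "card U2 \<le> card ER * 2187" .
  have fU: "finite (U1 \<union> U2)"
  proof -
    have "U1 \<union> U2 \<subseteq> ER \<times> EB" by (auto simp: U1_def U2_def K1_def K2_def)
    then show ?thesis using fR'(1) fB'(1) finite_subset by blast
  qed
  have "card C \<le> card (U1 \<union> U2)" by (rule card_mono[OF fU sub])
  also have "\<dots> \<le> card U1 + card U2" by (rule card_Un_le)
  finally have cC0: "card C \<le> card U1 + card U2" .
  have "2187 * (card ER + card EB) = card ER * 2187 + card EB * 2187" by simp
  then have cC: "card C \<le> 2187 * (card ER + card EB)" using cC0 u1 u2 by linarith
  have "card R + card B = card P" using RP fP by (simp add: B_def card_Diff_subset card_mono fR)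
  then have "card ER + card EB \<le> card P" using fR'(2) fB'(2) by linarith
  then have "2187 * (card ER + card EB) \<le> 2187 * card P" by (rule mult_le_mono2)
  then have "card C \<le> 2187 * card P" using cC by (rule order_trans[rotated])
  then show ?thesis by (simp add: cr2_def C_def ER_def EB_def B_def)
qed

theorem theorem1:
  shows "\<exists>c::real. c > 0 \<and>
    (\<forall>P. generic P \<and> P \<noteq> {} \<longrightarrow> real (cr P) < c * real (card P))"
proof (rule exI[of _ 2188], intro conjI allI impI)
  show "(0::real) < 2188" by simp
  fix P :: "point set" assume h: "generic P \<and> P \<noteq> {}"
  then have gP: "generic P" and ne: "P \<noteq> {}" by auto
  have fP: "finite P" using gP by (simp add: generic_def)
  have npos: "card P > 0" using fP ne by (simp add: card_gt_0_iff)
  define Q where "Q = {cr2 R (P - R) | R. R \<subseteq> P}"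
  have "Q = (\<lambda>R. cr2 R (P - R)) ` Pow P" by (auto simp: Q_def)
  then have fQ: "finite Q" using fP by simp
  have neQ: "Q \<noteq> {}" by (auto simp: Q_def)
  have "cr P \<in> Q" unfolding cr_def Q_def[symmetric] by (rule Max_in[OF fQ neQ])
  then obtain R where R: "R \<subseteq> P" "cr P = cr2 R (P - R)" by (auto simp: Q_def)
  have "cr P \<le> 2187 * card P" using cr2_bound[OF gP R(1)] R(2) by simp
  then have "real (cr P) \<le> 2187 * real (card P)" by (metis of_nat_le_iff of_nat_mult of_nat_numeral)
  also have "\<dots> < 2188 * real (card P)" using npos by simp
  finally show "real (cr P) < 2188 * real (card P)" .
qed

end
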